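(* Let $A$ be an associative (not necessarily unital) algebra over a field satisfying the identity $x_1\cdots x_n=x_{\sigma(1)}\cdots x_{\sigma(n)}$, where $\sigma\in S_n$ satisfies $\sigma(1)\ne1$ and $\sigma(n)\ne n$. Then $H_{n+2}$ contains $S(n+2;4,4)$.
   Context: For each $k$, $H_k\subseteq S_k$ is the set of permutations $\tau$ such that $A$ satisfies $x_1\cdots x_k=x_{\tau(1)}\cdots x_{\tau(k)}$ (i.e. $a_1\cdots a_k=a_{\tau(1)}\cdots a_{\tau(k)}$ for all $a_1,\dots,a_k\in A$). For $m\ge a,b$, $S(m;a,b)$ denotes the subgroup of $S_m$ generated by all permutations of the first $a$ letters $\{1,\dots,a\}$ and all permutations of the last $b$ letters $\{m-b+1,\dots,m\}$. *)

theory Defs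
  imports "HOL-Combinatorics.Permutations" "HOL.Vector_Spaces"
begin

fun lprod :: "('a::semigroup_mult) list \<Rightarrow> 'a" where
  "lprod [] = undefined"
| "lprod [x] = x"
| "lprod (x # y # xs) = x * lprod (y # xs)"

definition satisfies_perm_id :: "'a::semigroup_mult itself \<Rightarrow> nat \<Rightarrow> (nat \<Rightarrow> nat) \<Rightarrow> bool" where
  "satisfies_perm_id _ k \<tau> \<longleftrightarrow>
     (\<forall>a :: nat \<Rightarrow> 'a. lprod (map a [1..<k+1]) = lprod (map (a \<circ> \<tau>) [1..<k+1]))"

definition Hperm :: "'a::semigroup_mult itself \<Rightarrow> nat \<Rightarrow> (nat \<Rightarrow> nat) set" where
  "Hperm T k = {\<tau>. \<tau> permutes {1..k} \<and> satisfies_perm_id T k \<tau>}"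

inductive_set Sgen :: "nat \<Rightarrow> nat \<Rightarrow> nat \<Rightarrow> (nat \<Rightarrow> nat) set" for m a b where
  id: "id \<in> Sgen m a b"
| first: "\<sigma> permutes {1..a} \<Longrightarrow> \<sigma> \<in> Sgen m a b"
| last: "\<sigma> permutes {m-b+1..m} \<Longrightarrow> \<sigma> \<in> Sgen m a b"
| comp: "\<sigma> \<in> Sgen m a b \<Longrightarrow> \<rho> \<in> Sgen m a b \<Longrightarrow> \<sigma> \<circ> \<rho> \<in> Sgen m a b"
| inv: "\<sigma> \<in> Sgen m a b \<Longrightarrow> inv \<sigma> \<in> Sgen m a b"

end

theory Submission
  imports Defs
begin


lemma lprod_Cons: "xs \<noteq> [] \<Longrightarrow> lprod (x # xs) = x * lprod xs"
  by (cases xs) auto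

lemma lprod_append: "xs \<noteq> [] \<Longrightarrow> ys \<noteq> [] \<Longrightarrow> lprod (xs @ ys) = lprod xs * lprod ys"
proof (induction xs)
  case Nil then show ?case by simp
next
  case (Cons x xs)
  show ?case
  proof (cases "xs = []")
    case True then show ?thesis using Cons by (simp add: lprod_Cons)
  next
    case False then show ?thesis using Cons by (simp add: lprod_Cons mult.assoc)
  qed
qed

lemma lprod_group: "B \<noteq> [] \<Longrightarrow> lprod (A @ lprod B # C) = lprod (A @ B @ C)"
proof -
  assume B: "B \<noteq> []"
  have 1: "lprod (lprod B # C) = lprod (B @ C)"
    using B by (cases "C = []") (auto simp: lprod_Cons lprod_append)
  show ?thesis
  proof (cases "A = []")
    case True then show ?thesis using 1 by simp
  next
    case False then show ?thesis using 1 B by (simp add: lprod_append)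
  qed
qed

lemma lprod_pair: "lprod (A @ (x * y) # C) = lprod (A @ x # y # C)"
  using lprod_group[of "[x, y]" A C] by simp

lemma lprod_regroup:
  assumes "length U \<ge> k" "k \<ge> 1"
  shows "\<exists>U'. length U' = k \<and> (\<forall>A C. lprod (A @ U' @ C) = lprod (A @ U @ C))"
proof -
  define j where "j = length U - k + 1"
  have j: "j \<ge> 1" "j \<le> length U" using assms by (auto simp: j_def)
  define U' where "U' = lprod (take j U) # drop j U"
  have "length U' = k" using assms j by (simp add: U'_def j_def)
  moreover have "lprod (A @ U' @ C) = lprod (A @ U @ C)" for A C
  proof -
    have "take j U \<noteq> []" using j by (cases U) auto
    then have "lprod (A @ U' @ C) = lprod (A @ take j U @ drop j U @ C)"
      unfolding U'_def using lprod_group[of "take j U" A "drop j U @ C"] by simp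
    then show ?thesis by (metis append_take_drop_id append.assoc)
  qed
  ultimately show ?thesis by blast
qed

definition permL :: "(nat \<Rightarrow> nat) \<Rightarrow> nat \<Rightarrow> 'b list \<Rightarrow> 'b list" where
  "permL s n X = map (\<lambda>i. X ! (s (Suc i) - 1)) [0..<n]"

definition invL :: "(nat \<Rightarrow> nat) \<Rightarrow> nat \<Rightarrow> 'b list \<Rightarrow> 'b list" where
  "invL s n Y = map (\<lambda>k. Y ! (inv s (Suc k) - 1)) [0..<n]"

lemma sat_LI:
  assumes "satisfies_perm_id TYPE('a::semigroup_mult) n s" "length (X::'a list) = n"
  shows "lprod X = lprod (permL s n X)"
proof -
  define a where "a = (\<lambda>i. X ! (i - 1))"
  have "map a [1..<n+1] = X" using assms(2)
    by (intro nth_equalityI) (auto simp: a_def simp del: upt_Suc)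
  moreover have "map (a \<circ> s) [1..<n+1] = permL s n X"
    by (intro nth_equalityI) (auto simp: a_def permL_def simp del: upt_Suc)
  ultimately show ?thesis using assms(1) unfolding satisfies_perm_id_def by metis
qed

context
  fixes s :: "nat \<Rightarrow> nat" and n :: nat
  assumes sp: "s permutes {1..n}"
begin

lemma s_range: "i \<in> {1..n} \<Longrightarrow> s i \<in> {1..n}"
  using permutes_in_image[OF sp] by blast

lemma si_range: "i \<in> {1..n} \<Longrightarrow> inv s i \<in> {1..n}"
  using permutes_in_image[OF permutes_inv[OF sp]] by blast

lemma permL_len[simp]: "length (permL s n X) = n" by (simp add: permL_def)
lemma invL_len[simp]: "length (invL s n X) = n" by (simp add: invL_def)

lemma invL_nth: "k < n \<Longrightarrow> invL s n Y ! k = Y ! (inv s (Suc k) - 1)"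
  by (simp add: invL_def)

lemma permL_invL: "length Y = n \<Longrightarrow> permL s n (invL s n Y) = Y"
proof (intro nth_equalityI)
  fix i assume "length Y = n" "i < length (permL s n (invL s n Y))"
  then have i: "i < n" by simp
  have r: "s (Suc i) \<in> {1..n}" using s_range i by auto
  then have "Suc (s (Suc i) - 1) = s (Suc i)" by auto
  then show "permL s n (invL s n Y) ! i = Y ! i"
    using i r by (simp add: permL_def invL_nth permutes_inverses[OF sp] Suc_le_eq)
qed (simp)

lemma permL_update:
  assumes "j < n" "length X = n"
  shows "permL s n (X[j := w]) = (permL s n X)[inv s (Suc j) - 1 := w]"
proof (intro nth_equalityI)
  fix i assume "i < length (permL s n (X[j := w]))"
  then have i: "i < n" by simp
  have r: "s (Suc i) \<in> {1..n}" using s_range i by auto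
  have r2: "inv s (Suc j) \<in> {1..n}" using si_range assms by auto
  have "(s (Suc i) - 1 = j) = (i = inv s (Suc j) - 1)"
  proof -
    have "(s (Suc i) - 1 = j) = (s (Suc i) = Suc j)" using r by auto
    also have "\<dots> = (inv s (Suc j) = Suc i)" using permutes_inv_eq[OF sp] by metis
    also have "\<dots> = (i = inv s (Suc j) - 1)" using r2 by auto
    finally show ?thesis .
  qed
  moreover have lt: "s (Suc i) - 1 < n" using r by auto
  moreover have "permL s n (X[j := w]) ! i = (if s (Suc i) - 1 = j then w else X ! (s (Suc i) - 1))"
    using i lt assms by (simp add: permL_def nth_list_update)
  moreover have "(permL s n X)[inv s (Suc j) - 1 := w] ! i = (if i = inv s (Suc j) - 1 then w else X ! (s (Suc i) - 1))"
    using i by (simp add: permL_def nth_list_update)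
  ultimately show "permL s n (X[j := w]) ! i = (permL s n X)[inv s (Suc j) - 1 := w] ! i"
    by simp
qed simp

end


context
  fixes s :: "nat \<Rightarrow> nat" and n :: nat
  assumes sp: "s permutes {1..n}"
    and s1: "s 1 \<noteq> 1"
    and LI: "\<And>X::'a::semigroup_mult list. length X = n \<Longrightarrow> lprod X = lprod (permL s n X)"
begin

definition "pp = inv s 1"

lemma n_ge1: "n \<ge> 1"
proof (rule ccontr)
  assume "\<not> n \<ge> 1"
  then have "1 \<notin> {1..n}" by simp
  then show False using s1 permutes_not_in[OF sp] by blast
qed

lemma pp_range: "2 \<le> pp" "pp \<le> n"
proof -
  have "pp \<in> {1..n}" unfolding pp_def using si_range[OF sp] n_ge1 by auto
  moreover have "pp \<noteq> 1" unfolding pp_def using s1 permutes_inv_eq[OF sp] by metis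
  ultimately show "2 \<le> pp" "pp \<le> n" by auto
qed

lemma n_ge2: "n \<ge> 2" using pp_range by simp

lemma L1:
  assumes "length (Y::'a list) = n"
  shows "lprod (z # Y) = lprod (take (pp - 1) Y @ z # drop (pp - 1) Y)"
proof -
  define X where "X = invL s n Y"
  have lX: "length X = n" by (simp add: X_def invL_len[OF sp])
  have pY: "permL s n X = Y" using permL_invL[OF sp assms] X_def by simp
  obtain x0 R where XR: "X = x0 # R" using lX n_ge1 by (cases X) auto
  have x0: "x0 = Y ! (pp - 1)" using XR invL_nth[OF sp, of 0 Y] n_ge1 unfolding X_def pp_def by auto
  define X' where "X' = X[0 := z * x0]"
  have lX': "length X' = n" using lX by (simp add: X'_def)
  have "lprod X' = z * lprod X"
    using XR by (cases "R = []") (auto simp: X'_def lprod_Cons mult.assoc)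
  also have "\<dots> = z * lprod Y" using LI[OF lX] pY by simp
  also have "\<dots> = lprod (z # Y)"
  proof -
    have "Y \<noteq> []" using assms n_ge1 by auto
    then show ?thesis by (simp add: lprod_Cons)
  qed
  finally have 1: "lprod (z # Y) = lprod X'" by simp
  have "permL s n X' = Y[pp - 1 := z * x0]"
    unfolding X'_def using permL_update[OF sp, of 0 X "z * x0"] n_ge1 lX pY by (simp add: pp_def)
  also have "\<dots> = take (pp - 1) Y @ (z * Y ! (pp - 1)) # drop pp Y"
    using pp_range assms x0 by (simp add: upd_conv_take_nth_drop)
  finally have 2: "lprod X' = lprod (take (pp - 1) Y @ (z * Y ! (pp - 1)) # drop pp Y)"
    using LI[OF lX'] by simp
  have 3: "drop (pp - 1) Y = Y ! (pp - 1) # drop pp Y"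
  proof -
    have "pp - 1 < length Y" using pp_range assms by simp
    then have "drop (pp - 1) Y = Y ! (pp - 1) # drop (Suc (pp - 1)) Y" by (rule Cons_nth_drop_Suc[symmetric])
    moreover have "Suc (pp - 1) = pp" using pp_range by simp
    ultimately show ?thesis by simp
  qed
  show ?thesis using 1 2 3 lprod_pair by simp
qed

lemma L1g:
  assumes "length U \<ge> pp - 1" "length T \<ge> n + 1 - pp"
  shows "lprod (z # U @ T) = lprod (U @ z # (T::'a list))"
proof -
  obtain U' where U': "length U' = pp - 1" "\<And>A C. lprod (A @ U' @ C) = lprod (A @ U @ C)"
    using lprod_regroup[OF assms(1)] pp_range by force
  obtain T' where T': "length T' = n + 1 - pp" "\<And>A C. lprod (A @ T' @ C) = lprod (A @ T @ C)"
    using lprod_regroup[OF assms(2)] pp_range by force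
  have "lprod (z # U @ T) = lprod ([z] @ U' @ T)" using U'(2)[of "[z]" T] by simp
  also have "\<dots> = lprod ((z # U') @ T' @ [])" using T'(2)[of "z # U'" "[]"] by simp
  also have "\<dots> = lprod (z # (U' @ T'))" by simp
  also have "\<dots> = lprod (take (pp - 1) (U' @ T') @ z # drop (pp - 1) (U' @ T'))"
    using L1[of "U' @ T'" z] U'(1) T'(1) pp_range by simp
  also have "\<dots> = lprod (U' @ z # T')" using U'(1) by simp
  also have "\<dots> = lprod ((U' @ [z]) @ T' @ [])" by simp
  also have "\<dots> = lprod ((U' @ [z]) @ T @ [])" using T'(2) by metis
  also have "\<dots> = lprod ([] @ U' @ (z # T))" by simp
  also have "\<dots> = lprod ([] @ U @ (z # T))" using U'(2) by metis
  finally show ?thesis by simp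
qed

lemma S12:
  assumes "length (V::'a list) = n"
  shows "lprod (a # b # V) = lprod (b # a # V)"
proof -
  have "lprod (a # b # V) = lprod (a # (b # take (pp - 1) V) @ drop (pp - 1) V)" by simp
  also have "\<dots> = lprod ((b # take (pp - 1) V) @ a # drop (pp - 1) V)"
    by (rule L1g) (use assms pp_range in auto)
  also have "\<dots> = b * lprod (take (pp - 1) V @ a # drop (pp - 1) V)"
    by (simp add: lprod_Cons)
  also have "lprod (take (pp - 1) V @ a # drop (pp - 1) V) = lprod (a # take (pp - 1) V @ drop (pp - 1) V)"
    by (rule L1g[symmetric]) (use assms pp_range in auto)
  also have "b * lprod (a # take (pp - 1) V @ drop (pp - 1) V) = lprod (b # a # V)"
    by (simp add: lprod_Cons)
  finally show ?thesis .
qed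

lemma S23:
  assumes "length (V::'a list) = n - 1"
  shows "lprod (c # a # b # V) = lprod (c # b # a # V)"
proof -
  have "lprod (c # a # b # V) = lprod (c # (a # b # take (pp - 2) V) @ drop (pp - 2) V)" by simp
  also have "\<dots> = lprod ((a # b # take (pp - 2) V) @ c # drop (pp - 2) V)"
    by (rule L1g) (use assms pp_range in auto)
  also have "\<dots> = lprod (a # b # (take (pp - 2) V @ c # drop (pp - 2) V))" by simp
  also have "\<dots> = lprod (b # a # (take (pp - 2) V @ c # drop (pp - 2) V))"
    by (rule S12) (use assms pp_range in auto)
  also have "\<dots> = lprod ((b # a # take (pp - 2) V) @ c # drop (pp - 2) V)" by simp
  also have "\<dots> = lprod (c # (b # a # take (pp - 2) V) @ drop (pp - 2) V)"
    by (rule L1g[symmetric]) (use assms pp_range in auto)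
  finally show ?thesis by simp
qed

lemma S34_big:
  assumes "length (V::'a list) = n - 2" "pp \<ge> 3"
  shows "lprod (e # c # a # b # V) = lprod (e # c # b # a # V)"
proof -
  have "lprod (e # c # a # b # V) = lprod (e # (c # a # b # take (pp - 3) V) @ drop (pp - 3) V)" by simp
  also have "\<dots> = lprod ((c # a # b # take (pp - 3) V) @ e # drop (pp - 3) V)"
    by (rule L1g) (use assms pp_range in auto)
  also have "\<dots> = lprod (c # a # b # (take (pp - 3) V @ e # drop (pp - 3) V))" by simp
  also have "\<dots> = lprod (c # b # a # (take (pp - 3) V @ e # drop (pp - 3) V))"
    by (rule S23) (use assms pp_range in auto)
  also have "\<dots> = lprod ((c # b # a # take (pp - 3) V) @ e # drop (pp - 3) V)" by simp
  also have "\<dots> = lprod (e # (c # b # a # take (pp - 3) V) @ drop (pp - 3) V)"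
    by (rule L1g[symmetric]) (use assms pp_range in auto)
  finally show ?thesis by simp
qed

lemma S34_small:
  assumes "length (V::'a list) = n - 2" "pp = 2"
  shows "lprod (e # c # a # b # V) = lprod (e # c # b # a # V)"
proof -
  define Y where "Y = (e * c) # (a * b) # V"
  have lY: "length Y = n" using assms n_ge2 by (simp add: Y_def)
  define X where "X = invL s n Y"
  have lX: "length X = n" by (simp add: X_def invL_len[OF sp])
  have pY: "permL s n X = Y" using permL_invL[OF sp lY] X_def by simp
  define i where "i = s 1"
  have i1: "i \<in> {1..n}" unfolding i_def using s_range[OF sp] n_ge1 by auto
  then have i2: "2 \<le> i" "i \<le> n" using s1 unfolding i_def by auto
  have is1: "inv s i = 1" unfolding i_def using permutes_inverses[OF sp] by simp
  have X0: "X ! 0 = a * b" using invL_nth[OF sp, of 0 Y] n_ge1 assms(2)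
    unfolding X_def pp_def Y_def by auto
  have Xi: "X ! (i - 1) = e * c" using invL_nth[OF sp, of "i - 1" Y] i2 is1
    unfolding X_def Y_def by auto
  obtain R where XR: "X = (a * b) # R" using lX n_ge1 X0 by (cases X) auto
  have lR: "length R = n - 1" using XR lX by auto
  have Ri: "R ! (i - 2) = e * c" using Xi XR i2
    by (metis One_nat_def Suc_1 diff_Suc_eq_diff_pred nth_Cons_pos zero_less_diff
        Suc_le_lessD)
  define W where "W = take (i - 2) R @ e # c # drop (i - 1) R"
  have lW: "length W = n" using lR i2 by (simp add: W_def)
  have Rsplit: "R = take (i - 2) R @ (e * c) # drop (i - 1) R"
  proof -
    have "i - 2 < length R" using lR i2 by simp
    then have "R = take (i - 2) R @ R ! (i - 2) # drop (Suc (i - 2)) R"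
      by (simp add: id_take_nth_drop)
    moreover have "Suc (i - 2) = i - 1" using i2 by simp
    ultimately show ?thesis using Ri by simp
  qed
  have gR: "lprod (x # y # R) = lprod (x # y # W)" for x y
  proof -
    have "lprod (x # y # R) = lprod ((x # y # take (i - 2) R) @ (e * c) # drop (i - 1) R)"
      using Rsplit by (metis append_Cons)
    also have "\<dots> = lprod ((x # y # take (i - 2) R) @ e # c # drop (i - 1) R)"
      by (rule lprod_pair)
    finally show ?thesis by (simp add: W_def)
  qed
  have "lprod (e # c # a # b # V) = lprod Y"
    using lprod_pair[of "[]" e c "a # b # V"] lprod_pair[of "[e * c]" a b V] by (simp add: Y_def)
  also have "\<dots> = lprod X" using LI[OF lX] pY by simp
  also have "\<dots> = lprod (a # b # R)" using XR lprod_pair[of "[]" a b R] by simp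
  also have "\<dots> = lprod (a # b # W)" by (rule gR)
  also have "\<dots> = lprod (b # a # W)" by (rule S12[OF lW])
  also have "\<dots> = lprod (b # a # R)" by (rule gR[symmetric])
  also have "\<dots> = lprod (X[0 := b * a])" using XR lprod_pair[of "[]" b a R] by simp
  also have "\<dots> = lprod (permL s n (X[0 := b * a]))" using LI lX by simp
  also have "permL s n (X[0 := b * a]) = Y[1 := b * a]"
    using permL_update[OF sp, of 0 X "b * a"] n_ge1 lX pY assms(2) by (simp add: pp_def)
  also have "lprod (Y[1 := b * a]) = lprod (e # c # b # a # V)"
    using lprod_pair[of "[]" e c "b # a # V"] lprod_pair[of "[e * c]" b a V] by (simp add: Y_def)
  finally show ?thesis .
qed

lemma S34:
  assumes "length (V::'a list) = n - 2"
  shows "lprod (e # c # a # b # V) = lprod (e # c # b # a # V)"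
  using S34_big[OF assms] S34_small[OF assms] pp_range by (cases "pp = 2") auto

end


lemma t_conj: "transpose a b \<circ> transpose b c \<circ> transpose a b = transpose a (c::nat)"
  if "a \<noteq> b" "b \<noteq> c" "a \<noteq> c"
  using that by (auto simp: fun_eq_iff transpose_def)

lemma block_perm:
  fixes H :: "(nat \<Rightarrow> nat) set"
  assumes idH: "id \<in> H" and cH: "\<And>x y. x \<in> H \<Longrightarrow> y \<in> H \<Longrightarrow> x \<circ> y \<in> H"
    and t1: "transpose k (k+1) \<in> H" and t2: "transpose (k+1) (k+2) \<in> H"
    and t3: "transpose (k+2) (k+3) \<in> H"
    and q: "q permutes {k..k+3}"
  shows "q \<in> H"
proof -
  have t13: "transpose k (k+2) \<in> H"
    using cH[OF cH[OF t1 t2] t1] t_conj[of k "k+1" "k+2"] by simp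
  have t24: "transpose (k+1) (k+3) \<in> H"
    using cH[OF cH[OF t2 t3] t2] t_conj[of "k+1" "k+2" "k+3"] by simp
  have t14: "transpose k (k+3) \<in> H"
    using cH[OF cH[OF t1 t24] t1] t_conj[of k "k+1" "k+3"] by simp
  have tr: "transpose a b \<in> H" if "a \<in> {k..k+3}" "b \<in> {k..k+3}" for a b
  proof -
    have a: "a = k \<or> a = k+1 \<or> a = k+2 \<or> a = k+3" and b: "b = k \<or> b = k+1 \<or> b = k+2 \<or> b = k+3"
      using that by auto
    have H': "transpose a b \<in> H" if "transpose b a \<in> H" for a b
      using that by (simp add: transpose_commute)
    show ?thesis using a b t1 t2 t3 t13 t24 t14 H' idH by auto
  qed
  show ?thesis using q finite_atLeastAtMost[of k "k+3"]
  proof (induction rule: permutes_induct)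
    case id then show ?case using idH by (simp add: id_def)
  next
    case (swap a b p) then show ?case using tr cH by blast
  qed
qed

lemma Hperm_comp:
  fixes T :: "'b::semigroup_mult itself"
  assumes "x \<in> Hperm T k" "y \<in> Hperm T k" shows "x \<circ> y \<in> Hperm T k"
proof -
  have "x \<circ> y permutes {1..k}" using assms by (auto simp: Hperm_def intro: permutes_compose)
  moreover have "satisfies_perm_id T k (x \<circ> y)"
    unfolding satisfies_perm_id_def
  proof
    fix a :: "nat \<Rightarrow> 'b"
    have "lprod (map a [1..<k+1]) = lprod (map (a \<circ> x) [1..<k+1])"
      using assms(1) unfolding Hperm_def satisfies_perm_id_def mem_Collect_eq by metis
    also have "\<dots> = lprod (map ((a \<circ> x) \<circ> y) [1..<k+1])"
      using assms(2) unfolding Hperm_def satisfies_perm_id_def mem_Collect_eq by metis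
    finally show "lprod (map a [1..<k+1]) = lprod (map (a \<circ> (x \<circ> y)) [1..<k+1])"
      by (simp add: o_assoc)
  qed
  ultimately show ?thesis by (simp add: Hperm_def)
qed

lemma Hperm_inv:
  fixes T :: "'b::semigroup_mult itself"
  assumes "x \<in> Hperm T k" shows "inv x \<in> Hperm T k"
proof -
  have px: "x permutes {1..k}" using assms by (auto simp: Hperm_def)
  have "inv x permutes {1..k}" using px by (rule permutes_inv)
  moreover have "satisfies_perm_id T k (inv x)"
    unfolding satisfies_perm_id_def
  proof
    fix a :: "nat \<Rightarrow> 'b"
    have "lprod (map (a \<circ> inv x) [1..<k+1]) = lprod (map ((a \<circ> inv x) \<circ> x) [1..<k+1])"
      using assms(1) unfolding Hperm_def satisfies_perm_id_def mem_Collect_eq by metis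
    also have "(a \<circ> inv x) \<circ> x = a" using permutes_inv_o(2)[OF px] by (simp add: o_assoc[symmetric])
    finally show "lprod (map a [1..<k+1]) = lprod (map (a \<circ> inv x) [1..<k+1])" by (rule sym)
  qed
  ultimately show ?thesis by (simp add: Hperm_def)
qed

lemma Hperm_id: "id \<in> Hperm T k"
  by (simp add: Hperm_def satisfies_perm_id_def permutes_id)

lemma dec_list: "j + 1 < length L \<Longrightarrow> take j L @ L ! j # L ! (j+1) # drop (j+2) L = L"
proof -
  assume jl: "j + 1 < length L"
  have "drop j L = L ! j # drop (Suc j) L" using jl by (simp add: Cons_nth_drop_Suc)
  moreover have "drop (Suc j) L = L ! (j+1) # drop (j+2) L" using jl
    by (metis Cons_nth_drop_Suc Suc_eq_plus1 add_2_eq_Suc')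
  ultimately show ?thesis by (metis append_take_drop_id)
qed

lemma swap_list: "j + 1 < length L \<Longrightarrow> L[j := L ! (j+1), j+1 := L ! j] = take j L @ L ! (j+1) # L ! j # drop (j+2) L"
proof -
  assume jl: "j + 1 < length L"
  have "L[j := L ! (j+1), j+1 := L ! j] = (take j L @ L ! j # L ! (j+1) # drop (j+2) L)[j := L ! (j+1), j+1 := L ! j]"
    using dec_list[OF jl] by simp
  also have "\<dots> = take j L @ L ! (j+1) # L ! j # drop (j+2) L"
    using jl by (simp add: list_update_append)
  finally show ?thesis .
qed

lemma Hswap:
  assumes sw: "\<And>P a b S. length P = j \<Longrightarrow> length S = n - j \<Longrightarrow>
      lprod (P @ a # b # S) = lprod (P @ b # a # (S :: 'a::semigroup_mult list))"
    and j: "j \<le> n"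
  shows "transpose (j+1) (j+2) \<in> Hperm TYPE('a) (n+2)"
proof -
  have "transpose (j+1) (j+2) permutes {1..n+2}" using j by (intro permutes_swap_id) auto
  moreover have "satisfies_perm_id TYPE('a) (n+2) (transpose (j+1) (j+2))"
    unfolding satisfies_perm_id_def
  proof
    fix a :: "nat \<Rightarrow> 'a"
    define L where "L = map a [1..<n+2+1]"
    have lL: "length L = n + 2" by (simp add: L_def)
    have jl: "j + 1 < length L" using lL j by simp
    have Lj: "L ! j = a (j+1)" "L ! (j+1) = a (j+2)" using jl lL by (simp_all add: L_def del: upt_Suc)
    have L2': "map (a \<circ> transpose (j+1) (j+2)) [1..<n+2+1] = L[j := L ! (j+1), j+1 := L ! j]"
      unfolding Lj by (rule nth_equalityI) (auto simp: L_def nth_list_update transpose_def simp del: upt_Suc)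
    have L2: "map (a \<circ> transpose (j+1) (j+2)) [1..<n+2+1] = take j L @ a (j+2) # a (j+1) # drop (j+2) L"
      using swap_list[OF jl] unfolding L2' Lj .
    have L1: "take j L @ a (j+1) # a (j+2) # drop (j+2) L = L" using dec_list[OF jl] unfolding Lj .
    show "lprod (map a [1..<n+2+1]) = lprod (map (a \<circ> transpose (j+1) (j+2)) [1..<n+2+1])"
    proof -
      have "lprod L = lprod (take j L @ a (j+1) # a (j+2) # drop (j+2) L)" using L1 by simp
      also have "\<dots> = lprod (take j L @ a (j+2) # a (j+1) # drop (j+2) L)"
        by (rule sw) (use lL j in auto)
      finally show ?thesis unfolding L2 L_def[symmetric] .
    qed
  qed
  ultimately show ?thesis by (simp add: Hperm_def)
qed



datatype 'a opp = Opp (unopp: 'a)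

instantiation opp :: (semigroup_mult) semigroup_mult
begin
definition times_opp_def: "x * y = Opp (unopp y * unopp x)"
instance by standard (simp add: times_opp_def mult.assoc)
end

lemma lprod_opp: "xs \<noteq> [] \<Longrightarrow> lprod (map Opp xs) = Opp (lprod (rev (xs :: 'a::semigroup_mult list)))"
proof (induction xs)
  case Nil then show ?case by simp
next
  case (Cons x xs)
  show ?case
  proof (cases "xs = []")
    case True then show ?thesis by simp
  next
    case False
    then have "lprod (map Opp (x # xs)) = Opp x * Opp (lprod (rev xs))"
      using Cons by (simp add: lprod_Cons)
    also have "\<dots> = Opp (lprod (rev xs) * x)" by (simp add: times_opp_def)
    also have "\<dots> = Opp (lprod (rev xs @ [x]))" using False by (simp add: lprod_append)
    finally show ?thesis by simp
  qed
qed

lemma lprod_opp_rev: "ys \<noteq> [] \<Longrightarrow> lprod (map Opp (rev ys)) = Opp (lprod (ys :: 'a::semigroup_mult list))"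
  using lprod_opp[of "rev ys"] by simp

lemma permL_length[simp]: "length (permL s n X) = n" by (simp add: permL_def)

definition rv :: "nat \<Rightarrow> nat \<Rightarrow> nat" where
  "rv n i = (if i \<in> {1..n} then n + 1 - i else i)"

lemma rv_rv: "rv n (rv n i) = i" by (auto simp: rv_def)

lemma rv_permutes: "rv n permutes {1..n}"
  unfolding permutes_def
proof (intro conjI allI impI)
  fix y show "\<exists>!x. rv n x = y"
    by (metis rv_rv)
qed (auto simp: rv_def)

context
  fixes s :: "nat \<Rightarrow> nat" and n :: nat
  assumes sp: "s permutes {1..n}"
    and sn: "s n \<noteq> n" and n1: "n \<ge> 1"
    and LI: "\<And>X::'a::semigroup_mult list. length X = n \<Longrightarrow> lprod X = lprod (permL s n X)"
begin

definition "s' = rv n \<circ> s \<circ> rv n"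

lemma s'_perm: "s' permutes {1..n}"
  unfolding s'_def by (intro permutes_compose rv_permutes sp)

lemma s'_1: "s' 1 \<noteq> 1"
proof -
  have "rv n 1 = n" using n1 by (simp add: rv_def)
  moreover have "s n \<in> {1..n}" using s_range[OF sp] n1 by auto
  ultimately show ?thesis using sn n1 by (auto simp: s'_def rv_def)
qed

lemma s'_range: "i < n \<Longrightarrow> s' (Suc i) \<in> {1..n}"
  using permutes_in_image[OF s'_perm] by auto

lemma LI_opp:
  assumes "length (X' :: 'a opp list) = n"
  shows "lprod X' = lprod (permL s' n X')"
proof -
  define X where "X = map unopp X'"
  have XX: "X' = map Opp X" by (simp add: X_def o_def)
  have lX: "length X = n" using assms by (simp add: X_def)
  have ne: "X \<noteq> []" "permL s' n X \<noteq> []" using lX n1 by (auto simp: permL_def)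
  have pm: "permL s' n (map Opp X) = map Opp (permL s' n X)"
  proof (rule nth_equalityI)
    fix i assume "i < length (permL s' n (map Opp X))"
    then have i: "i < n" by simp
    have "s' (Suc i) - 1 < n" using s'_range[OF i] by auto
    then show "permL s' n (map Opp X) ! i = map Opp (permL s' n X) ! i" using i lX by (simp add: permL_def)
  qed (simp add: permL_def)
  have rp: "rev (permL s' n X) = permL s n (rev X)"
  proof (rule nth_equalityI)
    fix i assume "i < length (rev (permL s' n X))"
    then have i: "i < n" by simp
    have r: "s (Suc i) \<in> {1..n}" using s_range[OF sp] i by auto
    have "rv n (n - i) = Suc i" using i by (auto simp: rv_def)
    then have "s' (n - i) = n + 1 - s (Suc i)" using r by (simp add: s'_def rv_def)
    moreover have "Suc (n - Suc i) = n - i" using i by simp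
    ultimately have "rev (permL s' n X) ! i = X ! (n - s (Suc i))"
      using i r by (simp add: rev_nth permL_def)
    moreover have "permL s n (rev X) ! i = X ! (n - s (Suc i))"
    proof -
      have "rev X ! (s (Suc i) - 1) = X ! (length X - Suc (s (Suc i) - 1))"
        using r lX by (intro rev_nth) auto
      moreover have "length X - Suc (s (Suc i) - 1) = n - s (Suc i)" using r lX by auto
      ultimately show ?thesis using i by (simp add: permL_def)
    qed
    ultimately show "rev (permL s' n X) ! i = permL s n (rev X) ! i" by simp
  qed simp
  have "lprod X' = Opp (lprod (rev X))" using XX lprod_opp ne by simp
  also have "\<dots> = Opp (lprod (permL s n (rev X)))" using LI[of "rev X"] lX by simp
  also have "\<dots> = Opp (lprod (rev (permL s' n X)))" using rp by simp
  also have "\<dots> = lprod (map Opp (permL s' n X))" using lprod_opp[OF ne(2)] by simp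
  also have "\<dots> = lprod (permL s' n X')" using XX pm by simp
  finally show ?thesis .
qed

lemma oS12: "length (V::'a opp list) = n \<Longrightarrow> lprod (a#b#V) = lprod (b#a#V)"
  by (rule S12[OF s'_perm s'_1 LI_opp])
lemma oS23: "length (V::'a opp list) = n - 1 \<Longrightarrow> lprod (c#a#b#V) = lprod (c#b#a#V)"
  by (rule S23[OF s'_perm s'_1 LI_opp])
lemma oS34: "length (V::'a opp list) = n - 2 \<Longrightarrow> lprod (e#c#a#b#V) = lprod (e#c#b#a#V)"
  by (rule S34[OF s'_perm s'_1 LI_opp])

lemma B12:
  assumes "length (P::'a list) = n"
  shows "lprod (P @ [a, b]) = lprod (P @ [b, a])"
proof -
  have "Opp (lprod (P @ [a, b])) = lprod (map Opp (rev (P @ [a, b])))" by (rule lprod_opp_rev[symmetric]) simp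
  also have "\<dots> = lprod (Opp b # Opp a # map Opp (rev P))" by simp
  also have "\<dots> = lprod (Opp a # Opp b # map Opp (rev P))" apply (rule oS12) using assms apply simp done
  also have "\<dots> = lprod (map Opp (rev (P @ [b, a])))" by simp
  also have "\<dots> = Opp (lprod (P @ [b, a]))" by (rule lprod_opp_rev) simp
  finally show ?thesis by simp
qed

lemma B23:
  assumes "length (P::'a list) = n - 1"
  shows "lprod (P @ [a, b, c]) = lprod (P @ [b, a, c])"
proof -
  have "Opp (lprod (P @ [a, b, c])) = lprod (map Opp (rev (P @ [a, b, c])))" by (rule lprod_opp_rev[symmetric]) simp
  also have "\<dots> = lprod (Opp c # Opp b # Opp a # map Opp (rev P))" by simp
  also have "\<dots> = lprod (Opp c # Opp a # Opp b # map Opp (rev P))" by (rule oS23) (simp add: assms)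
  also have "\<dots> = lprod (map Opp (rev (P @ [b, a, c])))" by simp
  also have "\<dots> = Opp (lprod (P @ [b, a, c]))" by (rule lprod_opp_rev) simp
  finally show ?thesis by simp
qed

lemma B34:
  assumes "length (P::'a list) = n - 2"
  shows "lprod (P @ [a, b, c, e]) = lprod (P @ [b, a, c, e])"
proof -
  have "Opp (lprod (P @ [a, b, c, e])) = lprod (map Opp (rev (P @ [a, b, c, e])))" by (rule lprod_opp_rev[symmetric]) simp
  also have "\<dots> = lprod (Opp e # Opp c # Opp b # Opp a # map Opp (rev P))" by simp
  also have "\<dots> = lprod (Opp e # Opp c # Opp a # Opp b # map Opp (rev P))" by (rule oS34) (simp add: assms)
  also have "\<dots> = lprod (map Opp (rev (P @ [b, a, c, e])))" by simp
  also have "\<dots> = Opp (lprod (P @ [b, a, c, e]))" by (rule lprod_opp_rev) simp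
  finally show ?thesis by simp
qed

end


lemma len1: "length P = Suc 0 \<Longrightarrow> \<exists>c. P = [c]" by (auto simp: length_Suc_conv)
lemma len2: "length P = Suc (Suc 0) \<Longrightarrow> \<exists>c e. P = [c, e]" by (auto simp: length_Suc_conv)

theorem lemma2p14:
  fixes scale :: "'k::field \<Rightarrow> 'a::ring \<Rightarrow> 'a"
    and n :: nat and \<sigma> :: "nat \<Rightarrow> nat"
  assumes "module scale"
    and "\<And>c x y. scale c (x * y) = scale c x * y"
    and "\<And>c x y. scale c (x * y) = x * scale c y"
    and "\<sigma> permutes {1..n}" and "\<sigma> 1 \<noteq> 1" and "\<sigma> n \<noteq> n"
    and "satisfies_perm_id TYPE('a) n \<sigma>"
  shows "Sgen (n+2) 4 4 \<subseteq> Hperm TYPE('a) (n+2)"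
proof -
  note sp = assms(4) and s1 = assms(5) and sn = assms(6)
  have LI: "\<And>X::'a list. length X = n \<Longrightarrow> lprod X = lprod (permL \<sigma> n X)"
    using sat_LI[OF assms(7)] by blast
  have n2: "n \<ge> 2" using n_ge2[OF sp s1 LI] .
  have n1: "n \<ge> 1" using n2 by simp
  let ?H = "Hperm TYPE('a) (n+2)"
  have t0: "transpose (0+1) (0+2) \<in> ?H"
  proof (rule Hswap)
    fix P S :: "'a list" and a b :: 'a assume "length (P::'a list) = 0" "length S = n - 0"
    then show "lprod (P @ a # b # S) = lprod (P @ b # a # S)" using S12[OF sp s1 LI] by simp
  qed simp
  have t1: "transpose (1+1) (1+2) \<in> ?H"
  proof (rule Hswap)
    fix P S :: "'a list" and a b :: 'a assume P: "length (P::'a list) = 1" "length S = n - 1"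
    then obtain c where "P = [c]" using len1 by auto
    then show "lprod (P @ a # b # S) = lprod (P @ b # a # S)" using S23[OF sp s1 LI P(2)] by simp
  qed (use n1 in simp)
  have t2: "transpose (2+1) (2+2) \<in> ?H"
  proof (rule Hswap)
    fix P S :: "'a list" and a b :: 'a assume P: "length (P::'a list) = 2" "length S = n - 2"
    then have "length P = Suc (Suc 0)" by simp
    then obtain c e where "P = [c, e]" using len2 by blast
    then show "lprod (P @ a # b # S) = lprod (P @ b # a # S)" using S34[OF sp s1 LI P(2)] by simp
  qed (use n2 in simp)
  have u0: "transpose (n+1) (n+2) \<in> ?H"
  proof (rule Hswap)
    fix P S :: "'a list" and a b :: 'a assume P: "length (P::'a list) = n" "length S = n - n"
    then show "lprod (P @ a # b # S) = lprod (P @ b # a # S)" using B12[OF sp sn n1 LI P(1)] by simp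
  qed simp
  have u1: "transpose (n-1+1) (n-1+2) \<in> ?H"
  proof (rule Hswap)
    fix P S :: "'a list" and a b :: 'a assume P: "length (P::'a list) = n - 1" "length S = n - (n - 1)"
    then obtain c where "S = [c]" using len1 n1 by auto
    then show "lprod (P @ a # b # S) = lprod (P @ b # a # S)" using B23[OF sp sn n1 LI P(1)] by simp
  qed simp
  have u2: "transpose (n-2+1) (n-2+2) \<in> ?H"
  proof (rule Hswap)
    fix P S :: "'a list" and a b :: 'a assume P: "length (P::'a list) = n - 2" "length S = n - (n - 2)"
    then have "length S = Suc (Suc 0)" using n2 by simp
    then obtain c e where "S = [c, e]" using len2 by blast
    then show "lprod (P @ a # b # S) = lprod (P @ b # a # S)" using B34[OF sp sn n1 LI P(1)] by simp
  qed simp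
  have frontP: "q \<in> ?H" if "q permutes {1..4}" for q
    by (rule block_perm[of ?H 1]) (use t0 t1 t2 that Hperm_id Hperm_comp in \<open>simp_all add: numeral_eq_Suc\<close>)
  have e1: "n - 2 + 1 = n - 1" "n - 2 + 2 = n - 1 + 1" "n + 1 = n - 1 + 2" "n + 2 = n - 1 + 3"
    "n + 2 - 4 + 1 = n - 1" using n2 by auto
  have backP: "q \<in> ?H" if "q permutes {n+2-4+1..n+2}" for q
  proof (rule block_perm[of ?H "n - 1"])
    show "transpose (n - 1) (n - 1 + 1) \<in> ?H" using u2 e1 by simp
    show "transpose (n - 1 + 1) (n - 1 + 2) \<in> ?H" using u1 by simp
    show "transpose (n - 1 + 2) (n - 1 + 3) \<in> ?H" using u0 e1 by simp
    show "q permutes {n - 1..n - 1 + 3}" using that e1 by simp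
  qed (use Hperm_id Hperm_comp in auto)
  show ?thesis
  proof
    fix x assume "x \<in> Sgen (n+2) 4 4"
    then show "x \<in> ?H"
    proof (induction rule: Sgen.induct)
      case id then show ?case by (rule Hperm_id)
    next
      case (first p) then show ?case by (rule frontP)
    next
      case (last p) then show ?case by (rule backP)
    next
      case (comp p r) then show ?case by (intro Hperm_comp comp.IH)
    next
      case (inv p) then show ?case by (intro Hperm_inv inv.IH)
    qed
  qed
qed

end
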